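(* Let $G=(V(G),E(G))$ be a finite connected graph with $N$ vertices, and attach to each vertex an $N$-level system $\mathbb{C}^N$. Let $H=\sum_{(i,j)\in E(G)}J_{ij}P_{ij}$ with all couplings $J_{ij}>0$. Then the ground state of $H$ is the $N$-singlet $|S^{(N)}_N\rangle$.
   Context: $P_{ij}$ is the swap operator on $(\mathbb{C}^N)^{\otimes N}$ exchanging tensor factors $i$ and $j$. Fix an orthonormal basis $\{|\alpha_k\rangle\}_{k=1}^N$ of $\mathbb{C}^N$. The $N$-singlet is $$|S^{(N)}_N\rangle=\frac{1}{\sqrt{N!}}\sum_{\pi\in S_N}\operatorname{sgn}(\pi)\,|\alpha_{\pi(1)},\dots,\alpha_{\pi(N)}\rangle,$$ the totally antisymmetric state: it satisfies $P_{ij}|S^{(N)}_N\rangle=-|S^{(N)}_N\rangle$ for all $i\ne j$. Up to a global phase it does not depend on the chosen basis, and $U^{\otimes N}|S^{(N)}_N\rangle=|S^{(N)}_N\rangle$ up to a phase for every unitary $U$ on $\mathbb{C}^N$. *)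

theory Defs
  imports Complex_Main "HOL-Combinatorics.Permutations"
begin

text \<open>Graph on the finite vertex type 'v (V(G) = UNIV, N = CARD('v)); edges are
  2-element subsets of vertices. The local space C^N has its orthonormal basis indexed
  by 'v as well, so a basis vector of (C^N)^{\<otimes>N} is a configuration c :: 'v \<Rightarrow> 'v
  (vertex i carries basis state alpha_(c i)), and a state is its coefficient function.\<close>

type_synonym 'v state = "('v \<Rightarrow> 'v) \<Rightarrow> complex"

definition is_graph :: "'v set set \<Rightarrow> bool" where
  "is_graph E \<longleftrightarrow> (\<forall>e\<in>E. card e = 2)"

definition adjacent :: "'v set set \<Rightarrow> 'v \<Rightarrow> 'v \<Rightarrow> bool" where
  "adjacent E u v \<longleftrightarrow> {u, v} \<in> E"

definition connected_graph :: "'v set set \<Rightarrow> bool" where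
  "connected_graph E \<longleftrightarrow> (\<forall>u v. (adjacent E)\<^sup>*\<^sup>* u v)"

definition swap_op :: "'v \<Rightarrow> 'v \<Rightarrow> 'v state \<Rightarrow> 'v state" where
  "swap_op i j \<psi> = (\<lambda>c. \<psi> (c \<circ> transpose i j))"

definition edge_swap :: "'v set \<Rightarrow> 'v state \<Rightarrow> 'v state" where
  "edge_swap e = (let p = (SOME p. e = {fst p, snd p} \<and> fst p \<noteq> snd p)
                  in swap_op (fst p) (snd p))"

definition hamiltonian :: "'v set set \<Rightarrow> ('v set \<Rightarrow> real) \<Rightarrow> 'v state \<Rightarrow> 'v state" where
  "hamiltonian E J \<psi> = (\<lambda>c. \<Sum>e\<in>E. complex_of_real (J e) * edge_swap e \<psi> c)"

definition singlet :: "('v::finite) state" where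
  "singlet = (\<lambda>c. if bij c then complex_of_real (real_of_int (sign c) / sqrt (fact (card (UNIV::'v set)))) else 0)"

end

theory Submission
  imports Defs
begin

lemma sum_reindex_inv:
  fixes g :: "('v::finite \<Rightarrow> 'v) \<Rightarrow> 'a::comm_monoid_add"
  assumes "\<And>x. t (t x) = x"
  shows "(\<Sum>c\<in>UNIV. g (c \<circ> t)) = (\<Sum>c\<in>UNIV. g c)"
  by (rule sum.reindex_bij_witness[of _ "\<lambda>c. c \<circ> t" "\<lambda>c. c \<circ> t"])
     (auto simp: o_def assms)

lemma cmod_add_sq: "(cmod (a + b))^2 = (cmod a)^2 + (cmod b)^2 + 2 * Re (cnj a * b)"
  by (simp add: cmod_power2 power2_sum algebra_simps)

lemma cnj_self_Im: "cnj z = z \<Longrightarrow> Im z = 0"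
  by (simp add: complex_eq_iff)

lemma cnj_mu: "cnj a * (\<mu> * a) = \<mu> * complex_of_real ((cmod a)^2)"
  by (metis complex_norm_square mult.commute mult.left_commute)

lemma key_real:
  fixes \<psi> :: "'v::finite state"
  assumes "\<And>x. t (t x) = x"
  shows "Im (\<Sum>c\<in>UNIV. cnj (\<psi> c) * \<psi> (c \<circ> t)) = 0"
proof -
  have "cnj (\<Sum>c\<in>UNIV. cnj (\<psi> c) * \<psi> (c \<circ> t)) = (\<Sum>c\<in>UNIV. \<psi> c * cnj (\<psi> (c \<circ> t)))"
    by simp
  also have "\<dots> = (\<Sum>c\<in>UNIV. \<psi> (c \<circ> t) * cnj (\<psi> (c \<circ> t \<circ> t)))"
    using sum_reindex_inv[OF assms, of "\<lambda>c. \<psi> c * cnj (\<psi> (c \<circ> t))"] by simp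
  also have "\<dots> = (\<Sum>c\<in>UNIV. cnj (\<psi> c) * \<psi> (c \<circ> t))"
    using assms by (simp add: o_def mult.commute)
  finally show ?thesis
    by (rule cnj_self_Im)
qed

lemma key_sq:
  fixes \<psi> :: "'v::finite state"
  assumes "\<And>x. t (t x) = x"
  shows "(\<Sum>c\<in>UNIV. (cmod (\<psi> c + \<psi> (c \<circ> t)))^2)
     = 2 * (\<Sum>c\<in>UNIV. (cmod (\<psi> c))^2) + 2 * Re (\<Sum>c\<in>UNIV. cnj (\<psi> c) * \<psi> (c \<circ> t))"
proof -
  have "(\<Sum>c\<in>UNIV. (cmod (\<psi> c + \<psi> (c \<circ> t)))^2)
     = (\<Sum>c\<in>UNIV. (cmod (\<psi> c))^2) + (\<Sum>c\<in>UNIV. (cmod (\<psi> (c \<circ> t)))^2)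
       + 2 * (\<Sum>c\<in>UNIV. Re (cnj (\<psi> c) * \<psi> (c \<circ> t)))"
    by (simp add: cmod_add_sq sum.distrib sum_distrib_left)
  also have "(\<Sum>c\<in>UNIV. (cmod (\<psi> (c \<circ> t)))^2) = (\<Sum>c\<in>UNIV. (cmod (\<psi> c))^2)"
    using sum_reindex_inv[OF assms, of "\<lambda>c. (cmod (\<psi> c))^2"] by simp
  finally show ?thesis by (simp only: Re_sum)
qed

definition T :: "'v set \<Rightarrow> 'v \<Rightarrow> 'v" where
  "T e = (let p = (SOME p. e = {fst p, snd p} \<and> fst p \<noteq> snd p) in transpose (fst p) (snd p))"

lemma edge_swap_T: "edge_swap e \<psi> = (\<lambda>c. \<psi> (c \<circ> T e))"
  unfolding edge_swap_def T_def swap_op_def Let_def by simp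

lemma T_inv: "T e (T e x) = x"
  unfolding T_def Let_def by simp

lemma T_edge:
  assumes "v \<noteq> w"
  shows "T {v, w} = transpose v w"
proof -
  have ex: "\<exists>p. {v, w} = {fst p, snd p} \<and> fst p \<noteq> snd p"
    using assms by (intro exI[of _ "(v, w)"]) simp
  define p where "p = (SOME p. {v, w} = {fst p, snd p} \<and> fst p \<noteq> snd p)"
  have p: "{v, w} = {fst p, snd p} \<and> fst p \<noteq> snd p"
    unfolding p_def by (rule someI_ex[OF ex])
  then have "(fst p = v \<and> snd p = w) \<or> (fst p = w \<and> snd p = v)"
    by (auto simp: doubleton_eq_iff)
  then have "transpose (fst p) (snd p) = transpose v w"
    by (auto simp: transpose_commute)
  then show ?thesis unfolding T_def p_def[symmetric] Let_def by simp
qed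

lemma card2_neq: "card {v, w} = 2 \<Longrightarrow> v \<noteq> w"
  by auto

lemma bij_permutes: "bij (p :: 'v \<Rightarrow> 'v) \<Longrightarrow> p permutes UNIV"
  by (rule bij_imp_permutes) auto

lemma permutation_fin: "permutation (p :: 'v::finite \<Rightarrow> 'v) \<longleftrightarrow> bij p"
  by (simp add: permutation)

lemma singlet_anti:
  assumes "i \<noteq> j"
  shows "singlet (c \<circ> transpose i j) = - (singlet c :: complex)"
proof -
  have bt: "bij (transpose i j)" by simp
  have "bij (c \<circ> transpose i j) \<longleftrightarrow> bij c"
  proof
    assume "bij (c \<circ> transpose i j)"
    then have "bij (c \<circ> transpose i j \<circ> transpose i j)" using bt bij_comp by blast
    then show "bij c" by (simp add: o_assoc[symmetric] o_def)
  next
    assume "bij c" then show "bij (c \<circ> transpose i j)" using bt bij_comp by blast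
  qed
  moreover have "bij c \<Longrightarrow> sign (c \<circ> transpose i j) = - sign c"
    using assms by (simp add: sign_compose permutation_fin sign_swap_id)
  ultimately show ?thesis unfolding singlet_def by auto
qed

lemma antisym_all:
  fixes \<psi> :: "'v::finite state"
  assumes anti: "\<And>i j c. i \<noteq> j \<Longrightarrow> \<psi> (c \<circ> transpose i j) = - \<psi> c"
  shows "\<exists>a. \<psi> = (\<lambda>c. a * singlet c)"
proof -
  have perm: "\<psi> (c \<circ> p) = of_int (sign p) * \<psi> c" if "p permutes (UNIV::'v set)" for p c
    using that finite_UNIV
  proof (induction arbitrary: c rule: permutes_induct)
    case id then show ?case by simp
  next
    case (swap a b p)
    have pp: "permutation p" using swap.hyps(4) by (simp add: permutation_fin permutes_bij)
    have "\<psi> (c \<circ> (transpose a b \<circ> p)) = \<psi> ((c \<circ> transpose a b) \<circ> p)" by (simp add: o_assoc)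
    also have "\<dots> = of_int (sign p) * \<psi> (c \<circ> transpose a b)" by (rule swap.IH)
    also have "\<dots> = - of_int (sign p) * \<psi> c" using anti[OF swap.hyps(3)] by simp
    also have "sign (transpose a b \<circ> p) = - sign p"
      using swap.hyps(3) pp by (simp add: sign_compose permutation_swap_id sign_swap_id)
    ultimately show ?case by (metis of_int_minus mult_minus_left)
  qed
  define a where "a = \<psi> id * complex_of_real (sqrt (fact (card (UNIV::'v set))))"
  have nz: "sqrt (fact (card (UNIV::'v set)) :: real) \<noteq> 0" by simp
  have "\<psi> c = a * singlet c" for c
  proof (cases "bij c")
    case True
    have "\<psi> c = \<psi> (id \<circ> c)" by simp
    also have "\<dots> = of_int (sign c) * \<psi> id" using perm[OF bij_permutes[OF True]] .
    finally show ?thesis using True nz unfolding a_def singlet_def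
      by (simp add: field_simps)
  next
    case False
    then have "\<not> inj c" using finite_UNIV_inj_surj[of c] by (auto simp: bij_def)
    then obtain i j where ij: "i \<noteq> j" "c i = c j" by (auto simp: inj_def)
    have "c \<circ> transpose i j = c"
      using ij by (auto simp: fun_eq_iff transpose_def)
    then have "\<psi> c = - \<psi> c" using anti[OF ij(1), of c] by simp
    then have "\<psi> c = 0" by simp
    then show ?thesis using False unfolding singlet_def by simp
  qed
  then show ?thesis by blast
qed


lemma R_step:
  fixes \<psi> :: "'v::finite state"
  assumes "\<forall>c. \<psi> (c \<circ> transpose u v) = - \<psi> c" "\<forall>c. \<psi> (c \<circ> transpose v w) = - \<psi> c"
    "u \<noteq> w" "v \<noteq> w"
  shows "\<forall>c. \<psi> (c \<circ> transpose u w) = - \<psi> c"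
proof
  fix c
  have "\<psi> (c \<circ> transpose u w) = \<psi> (((c \<circ> transpose u v) \<circ> transpose v w) \<circ> transpose u v)"
    unfolding transpose_comp_triple[OF assms(3,4), symmetric] by (simp only: comp_assoc)
  also have "\<dots> = - \<psi> c" using assms(1,2) by simp
  finally show "\<psi> (c \<circ> transpose u w) = - \<psi> c" .
qed

theorem theorem1:
  fixes E :: "('v::finite) set set" and J :: "'v set \<Rightarrow> real"
  assumes "is_graph E"
    and "connected_graph E"
    and "\<And>e. e \<in> E \<Longrightarrow> J e > 0"
  shows "\<exists>E0::real.
           hamiltonian E J singlet = (\<lambda>c. complex_of_real E0 * singlet c)
         \<and> (\<forall>(\<mu>::complex) (\<psi>::'v state). \<psi> \<noteq> (\<lambda>_. 0) \<and> hamiltonian E J \<psi> = (\<lambda>c. \<mu> * \<psi> c) \<longrightarrow>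
               (\<exists>r::real. \<mu> = complex_of_real r \<and> E0 \<le> r)
             \<and> (\<mu> = complex_of_real E0 \<longrightarrow> (\<exists>a::complex. \<psi> = (\<lambda>c. a * singlet c))))"
proof -
  have finE: "finite E" by (rule finite_subset[OF subset_UNIV finite_UNIV])
  have Eedge: "\<exists>v w. v \<noteq> w \<and> e = {v, w}" if "e \<in> E" for e
    using assms(1) that unfolding is_graph_def card_2_iff by blast
  have TE: "\<exists>v w. v \<noteq> w \<and> T e = transpose v w" if eE: "e \<in> E" for e
  proof -
    obtain v w where vw: "v \<noteq> w" "e = {v, w}" using Eedge[OF eE] by blast
    then have "T e = transpose v w" using T_edge[OF vw(1)] by simp
    then show ?thesis using vw(1) by blast
  qed
  define E0 where "E0 = - (\<Sum>e\<in>E. J e)"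
  have part1: "hamiltonian E J singlet = (\<lambda>c. complex_of_real E0 * singlet c)"
  proof
    fix c
    have "hamiltonian E J singlet c = (\<Sum>e\<in>E. complex_of_real (J e) * (- singlet c))"
      unfolding hamiltonian_def edge_swap_T
    proof (rule sum.cong)
      fix e assume "e \<in> E"
      then obtain v w where vw: "v \<noteq> w" "T e = transpose v w" using TE by blast
      have "singlet (c \<circ> T e) = - (singlet c :: complex)"
        unfolding vw(2) by (rule singlet_anti[OF vw(1)])
      then show "complex_of_real (J e) * singlet (c \<circ> T e) = complex_of_real (J e) * (- singlet c)"
        by simp
    qed simp
    also have "\<dots> = complex_of_real E0 * singlet c"
      unfolding E0_def by (simp add: sum_distrib_right sum_negf)
    finally show "hamiltonian E J singlet c = complex_of_real E0 * singlet c" .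
  qed
  have part2: "(\<exists>r::real. \<mu> = complex_of_real r \<and> E0 \<le> r)
             \<and> (\<mu> = complex_of_real E0 \<longrightarrow> (\<exists>a::complex. \<psi> = (\<lambda>c. a * singlet c)))"
    if nz: "\<psi> \<noteq> (\<lambda>_. 0)" and eig: "hamiltonian E J \<psi> = (\<lambda>c. \<mu> * \<psi> c)" for \<mu> \<psi>
  proof -
    define n where "n = (\<Sum>c\<in>UNIV. (cmod (\<psi> c))^2)"
    define Q where "Q e = (\<Sum>c\<in>UNIV. cnj (\<psi> c) * \<psi> (c \<circ> T e))" for e
    obtain c0 where c0: "\<psi> c0 \<noteq> 0" using nz by auto
    have "(cmod (\<psi> c0))^2 \<le> n" unfolding n_def
      by (rule member_le_sum) auto
    moreover have "(cmod (\<psi> c0))^2 > 0" using c0 by simp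
    ultimately have npos: "n > 0" by linarith
    have "(\<Sum>c\<in>UNIV. cnj (\<psi> c) * hamiltonian E J \<psi> c) = (\<Sum>e\<in>E. complex_of_real (J e) * Q e)"
      unfolding hamiltonian_def edge_swap_T Q_def
      by (simp add: sum_distrib_left sum_distrib_right mult_ac sum.swap[of _ E])
    moreover have "(\<Sum>c\<in>UNIV. cnj (\<psi> c) * hamiltonian E J \<psi> c) = \<mu> * complex_of_real n"
      unfolding eig n_def of_real_sum sum_distrib_left
      by (rule sum.cong) (simp_all only: cnj_mu)
    moreover have QR: "Q e = complex_of_real (Re (Q e))" for e
      using key_real[where \<psi>=\<psi> and t="T e", OF T_inv] unfolding Q_def by (simp add: complex_eq_iff)
    ultimately have mun: "\<mu> * complex_of_real n = complex_of_real (\<Sum>e\<in>E. J e * Re (Q e))"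
      by (metis (no_types, lifting) of_real_mult of_real_sum sum.cong)
    define r where "r = (\<Sum>e\<in>E. J e * Re (Q e)) / n"
    have mur: "\<mu> = complex_of_real r"
      using mun npos unfolding r_def by (simp add: field_simps)
    have sq: "(\<Sum>c\<in>UNIV. (cmod (\<psi> c + \<psi> (c \<circ> T e)))^2) = 2 * n + 2 * Re (Q e)" for e
      using key_sq[where \<psi>=\<psi> and t="T e", OF T_inv] unfolding n_def Q_def .
    have Qge: "Re (Q e) + n \<ge> 0" for e
    proof -
      have "0 \<le> (\<Sum>c\<in>UNIV. (cmod (\<psi> c + \<psi> (c \<circ> T e)))^2)" by (rule sum_nonneg) simp
      then show ?thesis using sq[of e] by linarith
    qed
    have terms: "0 \<le> J e * (Re (Q e) + n)" if "e \<in> E" for e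
      using assms(3)[OF that] Qge[of e] by simp
    have sumeq: "(\<Sum>e\<in>E. J e * (Re (Q e) + n)) = (\<Sum>e\<in>E. J e * Re (Q e)) - E0 * n"
      unfolding E0_def by (simp add: algebra_simps sum.distrib sum_distrib_left)
    have "E0 * n \<le> (\<Sum>e\<in>E. J e * Re (Q e))"
    proof -
      have "0 \<le> (\<Sum>e\<in>E. J e * (Re (Q e) + n))" by (rule sum_nonneg) (rule terms)
      then show ?thesis using sumeq by linarith
    qed
    then have "E0 \<le> r" unfolding r_def using npos by (simp add: field_simps)
    moreover have "\<exists>a::complex. \<psi> = (\<lambda>c. a * singlet c)" if "\<mu> = complex_of_real E0"
    proof -
      have "r = E0" using that mur by simp
      then have "(\<Sum>e\<in>E. J e * (Re (Q e) + n)) = 0"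
        using sumeq npos unfolding r_def by (simp add: field_simps)
      then have z: "J e * (Re (Q e) + n) = 0" if "e \<in> E" for e
        using sum_nonneg_eq_0_iff[OF finE, of "\<lambda>e. J e * (Re (Q e) + n)"] terms that by blast
      have edge: "\<psi> (c \<circ> T e) = - \<psi> c" if "e \<in> E" for e c
      proof -
        have "Re (Q e) + n = 0" using z[OF that] assms(3)[OF that] by simp
        then have "(\<Sum>c\<in>UNIV. (cmod (\<psi> c + \<psi> (c \<circ> T e)))^2) = 0" using sq[of e] by simp
        then have "(cmod (\<psi> c + \<psi> (c \<circ> T e)))^2 = 0"
          using sum_nonneg_eq_0_iff[of UNIV "\<lambda>c. (cmod (\<psi> c + \<psi> (c \<circ> T e)))^2"] by simp
        then have "\<psi> c + \<psi> (c \<circ> T e) = 0" by simp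
        then show ?thesis by (simp add: add_eq_0_iff)
      qed
      define R where "R u v \<longleftrightarrow> u = v \<or> (\<forall>c. \<psi> (c \<circ> transpose u v) = - \<psi> c)" for u v
      have adjR: "\<forall>c. \<psi> (c \<circ> transpose v w) = - \<psi> c" "v \<noteq> w" if "adjacent E v w" for v w
      proof -
        have inE: "{v, w} \<in> E" using that unfolding adjacent_def .
        have c2: "card {v, w} = 2" using assms(1) inE unfolding is_graph_def by blast
        show vw: "v \<noteq> w" by (rule card2_neq[OF c2])
        have "T {v, w} = transpose v w" by (rule T_edge[OF vw])
        then show "\<forall>c. \<psi> (c \<circ> transpose v w) = - \<psi> c"
          using edge[OF inE] by simp
      qed
      have allR: "R u v" for u v
      proof -
        have "(adjacent E)\<^sup>*\<^sup>* u v" using assms(2) unfolding connected_graph_def by blast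
        then show ?thesis
        proof (induction rule: rtranclp_induct)
          case base then show ?case unfolding R_def by simp
        next
          case (step v w)
          show ?case
          proof (cases "u = v")
            case True then show ?thesis using adjR[OF step(2)] unfolding R_def by simp
          next
            case False
            then have Ruv: "\<forall>c. \<psi> (c \<circ> transpose u v) = - \<psi> c" using step(3) unfolding R_def by simp
            show ?thesis
            proof (cases "u = w")
              case True then show ?thesis unfolding R_def by simp
            next
              case False
              then show ?thesis using R_step[OF Ruv adjR(1)[OF step(2)] False adjR(2)[OF step(2)]]
                unfolding R_def by simp
            qed
          qed
        qed
      qed
      show ?thesis
        by (rule antisym_all) (use allR in \<open>auto simp: R_def\<close>)
    qed
    ultimately show ?thesis using mur by blast
  qed
  show ?thesis using part1 part2 by blast
qed

end
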